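(* Let $\Gamma^B$ be either $\Gamma_1^B$ or $\Gamma_2^B$ (as in the context), with the operator $-\Delta=-d^2/dx^2$. Then the first eigenvalue $\lambda_1$ of $-\Delta$ on $\Gamma^B$ is simple. Moreover, if $\ell_1=\ell_2=\ell_3=\ell_4$, then the eigenfunction $\phi$ corresponding to $\lambda_1$ is identical on the four edges $e_1,\dots,e_4$, i.e. $\phi_1\equiv\phi_2\equiv\phi_3\equiv\phi_4$ where $\phi_j=\phi|_{e_j}$ (each edge parametrized from $B$ to $A$), and it is non-zero everywhere except at $B$.
   Context: $\Gamma_1$: two vertices $A,B$ joined by four edges $e_1,\dots,e_4$ of lengths $\ell_1,\dots,\ell_4>0$, with $\delta$-type condition (real coupling constant $\gamma_A$) at $A$. $\Gamma_2$: $\Gamma_1$ plus a vertex $C$ and edge $e_0$ of length $\ell_0>0$ joining $C$ to $A$, with Neumann–Kirchhoff conditions at $A$ and $C$. A $\delta$-type condition with coupling $\gamma_v$ at $v$: $f$ continuous at $v$ and $\sum_{e\ni v}f_e'(v)=\gamma_vf(v)$ (derivatives into the edges); Neumann–Kirchhoff means $\gamma_v=0$. $\Gamma_i^B$ is obtained from $\Gamma_i$ by imposing the Dirichlet condition $f_e(B)=0$ on every edge end at $B$ (which decouples the edge ends at $B$). *)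

theory Defs
  imports "HOL-Analysis.Analysis"
begin

definition edge_eig :: "real \<Rightarrow> real \<Rightarrow> (real \<Rightarrow> real) \<Rightarrow> (real \<Rightarrow> real) \<Rightarrow> bool" where
  "edge_eig l lam f f' \<longleftrightarrow>
     (\<exists>f''. \<forall>x\<in>{0..l}.
        (f has_real_derivative f' x) (at x within {0..l}) \<and>
        (f' has_real_derivative f'' x) (at x within {0..l}) \<and>
        - f'' x = lam * f x)"

definition edges :: "nat \<Rightarrow> nat set" where
  "edges i = (if i = 1 then {1..4} else {0..4})"

(* Coupling constant at A: gamma_A for Gamma_1, 0 (Neumann-Kirchhoff) for Gamma_2. *)
definition coupling :: "nat \<Rightarrow> real \<Rightarrow> real" where
  "coupling i gA = (if i = 1 then gA else 0)"

(* Edges e_1..e_4 are parametrised from B (x = 0) to A (x = l j);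
   edge e_0 (only for i = 2) is parametrised from A (x = 0) to C (x = l 0).
   phi j is the restriction to e_j, phi' j its derivative. *)
definition is_eigfun_B :: "nat \<Rightarrow> (nat \<Rightarrow> real) \<Rightarrow> real \<Rightarrow> real \<Rightarrow> (nat \<Rightarrow> real \<Rightarrow> real) \<Rightarrow> bool" where
  "is_eigfun_B i l gA lam phi \<longleftrightarrow>
     (\<exists>phi'.
        (\<forall>j\<in>edges i. edge_eig (l j) lam (phi j) (phi' j)) \<and>
        \<comment> \<open>Dirichlet condition at B on every edge end at B\<close>
        (\<forall>j\<in>{1..4}. phi j 0 = 0) \<and>
        \<comment> \<open>continuity at A\<close>
        (\<forall>j\<in>{1..4}. phi j (l j) = phi 1 (l 1)) \<and>
        (i = 2 \<longrightarrow> phi 0 0 = phi 1 (l 1)) \<and>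
        \<comment> \<open>delta / Kirchhoff condition at A (derivatives taken into the edges)\<close>
        ((if i = 2 then phi' 0 0 else 0) + (\<Sum>j\<in>{1..4}. - phi' j (l j))
           = coupling i gA * phi 1 (l 1)) \<and>
        \<comment> \<open>Neumann-Kirchhoff at C (only edge e_0 there)\<close>
        (i = 2 \<longrightarrow> phi' 0 (l 0) = 0) \<and>
        \<comment> \<open>non-trivial\<close>
        (\<exists>j\<in>edges i. \<exists>x\<in>{0..l j}. phi j x \<noteq> 0))"

definition is_eigval_B :: "nat \<Rightarrow> (nat \<Rightarrow> real) \<Rightarrow> real \<Rightarrow> real \<Rightarrow> bool" where
  "is_eigval_B i l gA lam \<longleftrightarrow> (\<exists>phi. is_eigfun_B i l gA lam phi)"

end

theory Submission
  imports Defs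
begin


definition S :: "real \<Rightarrow> real \<Rightarrow> real" where
  "S m x = (if m > 0 then sin (sqrt m * x) else if m = 0 then x else sinh (sqrt (-m) * x))"
definition S' :: "real \<Rightarrow> real \<Rightarrow> real" where
  "S' m x = (if m > 0 then sqrt m * cos (sqrt m * x) else if m = 0 then 1 else sqrt (-m) * cosh (sqrt (-m) * x))"
definition C :: "real \<Rightarrow> real \<Rightarrow> real" where
  "C m x = (if m > 0 then cos (sqrt m * x) else if m = 0 then 1 else cosh (sqrt (-m) * x))"
definition C' :: "real \<Rightarrow> real \<Rightarrow> real" where
  "C' m x = (if m > 0 then - sqrt m * sin (sqrt m * x) else if m = 0 then 0 else sqrt (-m) * sinh (sqrt (-m) * x))"

lemma S_deriv: "(S m has_real_derivative S' m x) (at x within A)"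
proof -
  consider "m > 0" | "m = 0" | "m < 0" by linarith
  then show ?thesis
  proof cases
    case 1
    have "((\<lambda>x. sin (sqrt m * x)) has_real_derivative cos (sqrt m * x) * (sqrt m * 1)) (at x within A)"
      by (auto intro!: derivative_eq_intros)
    then show ?thesis using 1 unfolding S_def[abs_def] S'_def by (simp add: mult.commute)
  next
    case 2 then show ?thesis unfolding S_def[abs_def] S'_def by (auto intro!: derivative_eq_intros)
  next
    case 3
    have "((\<lambda>x. sinh (sqrt (-m) * x)) has_real_derivative cosh (sqrt (-m) * x) * (sqrt (-m) * 1)) (at x within A)"
      by (auto intro!: derivative_eq_intros)
    then show ?thesis using 3 unfolding S_def[abs_def] S'_def by (simp add: mult.commute)
  qed
qed

lemma S'_deriv: "(S' m has_real_derivative - m * S m x) (at x within A)"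
proof -
  consider "m > 0" | "m = 0" | "m < 0" by linarith
  then show ?thesis
  proof cases
    case 1
    have "((\<lambda>x. sqrt m * cos (sqrt m * x)) has_real_derivative sqrt m * (- sin (sqrt m * x) * (sqrt m * 1))) (at x within A)"
      by (auto intro!: derivative_eq_intros)
    moreover have "sqrt m * (- sin (sqrt m * x) * (sqrt m * 1)) = - m * sin (sqrt m * x)"
      using 1 by (simp add: algebra_simps)
    ultimately have "((\<lambda>x. sqrt m * cos (sqrt m * x)) has_real_derivative - m * sin (sqrt m * x)) (at x within A)"
      by metis
    then show ?thesis using 1 unfolding S_def S'_def[abs_def] by simp
  next
    case 2 then show ?thesis unfolding S_def S'_def[abs_def] by (auto intro!: derivative_eq_intros)
  next
    case 3
    have "((\<lambda>x. sqrt (-m) * cosh (sqrt (-m) * x)) has_real_derivative sqrt (-m) * (sinh (sqrt (-m) * x) * (sqrt (-m) * 1))) (at x within A)"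
      by (auto intro!: derivative_eq_intros)
    moreover have "sqrt (-m) * (sinh (sqrt (-m) * x) * (sqrt (-m) * 1)) = - m * sinh (sqrt (-m) * x)"
    proof -
      have "sqrt (-m) * sqrt (-m) = -m" using 3 by simp
      then show ?thesis by (metis mult.assoc mult.commute mult_1_right)
    qed
    ultimately have "((\<lambda>x. sqrt (-m) * cosh (sqrt (-m) * x)) has_real_derivative - m * sinh (sqrt (-m) * x)) (at x within A)"
      by metis
    then show ?thesis using 3 unfolding S_def S'_def[abs_def] by simp
  qed
qed

lemma C_deriv: "(C m has_real_derivative C' m x) (at x within A)"
proof -
  consider "m > 0" | "m = 0" | "m < 0" by linarith
  then show ?thesis
  proof cases
    case 1
    have "((\<lambda>x. cos (sqrt m * x)) has_real_derivative - sin (sqrt m * x) * (sqrt m * 1)) (at x within A)"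
      by (auto intro!: derivative_eq_intros)
    then show ?thesis using 1 unfolding C_def[abs_def] C'_def by (simp add: mult.commute)
  next
    case 2 then show ?thesis unfolding C_def[abs_def] C'_def by (auto intro!: derivative_eq_intros)
  next
    case 3
    have "((\<lambda>x. cosh (sqrt (-m) * x)) has_real_derivative sinh (sqrt (-m) * x) * (sqrt (-m) * 1)) (at x within A)"
      by (auto intro!: derivative_eq_intros)
    then show ?thesis using 3 unfolding C_def[abs_def] C'_def by (simp add: mult.commute)
  qed
qed

lemma C'_deriv: "(C' m has_real_derivative - m * C m x) (at x within A)"
proof -
  consider "m > 0" | "m = 0" | "m < 0" by linarith
  then show ?thesis
  proof cases
    case 1
    have "((\<lambda>x. - sqrt m * sin (sqrt m * x)) has_real_derivative - sqrt m * (cos (sqrt m * x) * (sqrt m * 1))) (at x within A)"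
      by (auto intro!: derivative_eq_intros)
    moreover have "- sqrt m * (cos (sqrt m * x) * (sqrt m * 1)) = - m * cos (sqrt m * x)"
      using 1 by (simp add: algebra_simps)
    ultimately have "((\<lambda>x. - sqrt m * sin (sqrt m * x)) has_real_derivative - m * cos (sqrt m * x)) (at x within A)"
      by metis
    then show ?thesis using 1 unfolding C_def C'_def[abs_def] by simp
  next
    case 2 then show ?thesis unfolding C_def C'_def[abs_def] by (auto intro!: derivative_eq_intros)
  next
    case 3
    have "((\<lambda>x. sqrt (-m) * sinh (sqrt (-m) * x)) has_real_derivative sqrt (-m) * (cosh (sqrt (-m) * x) * (sqrt (-m) * 1))) (at x within A)"
      by (auto intro!: derivative_eq_intros)
    moreover have "sqrt (-m) * (cosh (sqrt (-m) * x) * (sqrt (-m) * 1)) = - m * cosh (sqrt (-m) * x)"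
    proof -
      have "sqrt (-m) * sqrt (-m) = -m" using 3 by simp
      then show ?thesis by (metis mult.assoc mult.commute mult_1_right)
    qed
    ultimately have "((\<lambda>x. sqrt (-m) * sinh (sqrt (-m) * x)) has_real_derivative - m * cosh (sqrt (-m) * x)) (at x within A)"
      by metis
    then show ?thesis using 3 unfolding C_def C'_def[abs_def] by simp
  qed
qed

lemma edge_eig_S: "edge_eig l m (\<lambda>x. a * S m x) (\<lambda>x. a * S' m x)"
  unfolding edge_eig_def
  by (rule exI[of _ "\<lambda>x. a * (- m * S m x)"])
     (intro ballI conjI DERIV_cmult S_deriv S'_deriv, simp)

lemma edge_eig_C: "edge_eig l m (\<lambda>x. a * C m (l - x)) (\<lambda>x. - a * C' m (l - x))"
  unfolding edge_eig_def
proof (rule exI[of _ "\<lambda>x. a * (- m * C m (l - x))"], intro ballI conjI)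
  fix x
  have "((\<lambda>x. a * C m (l - x)) has_real_derivative a * (C' m (l - x) * (0 - 1))) (at x within {0..l})"
    by (intro DERIV_cmult DERIV_chain2[OF C_deriv] derivative_eq_intros) auto
  then show "((\<lambda>x. a * C m (l - x)) has_real_derivative - a * C' m (l - x)) (at x within {0..l})" by simp
  have "((\<lambda>x. - a * C' m (l - x)) has_real_derivative - a * ((- m * C m (l - x)) * (0 - 1))) (at x within {0..l})"
    by (intro DERIV_cmult DERIV_chain2[OF C'_deriv] derivative_eq_intros) auto
  then show "((\<lambda>x. - a * C' m (l - x)) has_real_derivative a * (- m * C m (l - x))) (at x within {0..l})" by simp
  show "- (a * (- m * C m (l - x))) = m * (a * C m (l - x))" by simp
qed



lemma W_deriv:
  assumes f: "\<forall>x\<in>{0..l}. (f has_real_derivative f' x) (at x within {0..l}) \<and>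
        (f' has_real_derivative f2 x) (at x within {0..l}) \<and> - f2 x = mu * f x"
  and g: "\<forall>x\<in>{0..l}. (g has_real_derivative g' x) (at x within {0..l}) \<and>
        (g' has_real_derivative g2 x) (at x within {0..l}) \<and> - g2 x = lam * g x"
  and x: "x \<in> {0..l}"
  shows "((\<lambda>x. f' x * g x - f x * g' x) has_real_derivative (lam - mu) * (f x * g x)) (at x within {0..l})"
proof -
  have d1: "(f has_real_derivative f' x) (at x within {0..l})" "(f' has_real_derivative f2 x) (at x within {0..l})"
    "(g has_real_derivative g' x) (at x within {0..l})" "(g' has_real_derivative g2 x) (at x within {0..l})"
    using f g x by auto
  have "((\<lambda>x. f' x * g x - f x * g' x) has_real_derivative
      (f2 x * g x + f' x * g' x) - (f' x * g' x + f x * g2 x)) (at x within {0..l})"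
    by (rule derivative_eq_intros d1 refl)+ (simp add: algebra_simps)
  moreover have "(f2 x * g x + f' x * g' x) - (f' x * g' x + f x * g2 x) = (lam - mu) * (f x * g x)"
  proof -
    have "- f2 x = mu * f x" "- g2 x = lam * g x" using f g x by auto
    then have "f2 x = - mu * f x" "g2 x = - lam * g x" by linarith+
    then show ?thesis by (simp add: algebra_simps)
  qed
  ultimately show ?thesis by metis
qed

lemma wr_const:
  assumes "edge_eig l m f f'" "edge_eig l m g g'" "p \<in> {0..l}" "f' p * g p = f p * g' p" "x \<in> {0..l}"
  shows "f' x * g x = f x * g' x"
proof -
  obtain f2 where f: "\<forall>x\<in>{0..l}. (f has_real_derivative f' x) (at x within {0..l}) \<and>
        (f' has_real_derivative f2 x) (at x within {0..l}) \<and> - f2 x = m * f x"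
    using assms(1) unfolding edge_eig_def by blast
  obtain g2 where g: "\<forall>x\<in>{0..l}. (g has_real_derivative g' x) (at x within {0..l}) \<and>
        (g' has_real_derivative g2 x) (at x within {0..l}) \<and> - g2 x = m * g x"
    using assms(2) unfolding edge_eig_def by blast
  have "\<exists>c. \<forall>y\<in>{0..l}. f' y * g y - f y * g' y = c"
    by (rule has_field_derivative_zero_constant)
       (use W_deriv[OF f g] in auto)
  then obtain c where c: "\<forall>y\<in>{0..l}. f' y * g y - f y * g' y = c" by blast
  have "c = 0" using c assms(3,4) by auto
  then show ?thesis using c assms(5) by fastforce
qed

lemma ratio_const:
  assumes "\<forall>x\<in>{a..b}. g x \<noteq> 0"
    and "\<forall>x\<in>{a..b}. (f has_real_derivative f' x) (at x within {a..b})"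
    and "\<forall>x\<in>{a..b}. (g has_real_derivative g' x) (at x within {a..b})"
    and "\<forall>x\<in>{a..b}. f' x * g x = f x * g' x"
    and "x \<in> {a..b}" "y \<in> {a..b}"
  shows "f x * g y = f y * g x"
proof -
  have "\<exists>c. \<forall>z\<in>{a..b}. f z / g z = c"
  proof (rule has_field_derivative_zero_constant)
    fix z assume z: "z \<in> {a..b}"
    have "((\<lambda>z. f z / g z) has_real_derivative (f' z * g z - f z * g' z) / (g z * g z)) (at z within {a..b})"
      using assms(1,2,3) z by (intro DERIV_divide) auto
    moreover have "(f' z * g z - f z * g' z) / (g z * g z) = 0" using assms(4) z by simp
    ultimately show "((\<lambda>z. f z / g z) has_real_derivative 0) (at z within {a..b})" by metis
  qed auto
  then obtain c where "\<forall>z\<in>{a..b}. f z / g z = c" by blast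
  then have "f x / g x = f y / g y" using assms(5,6) by auto
  then show ?thesis using assms(1,5,6) by (simp add: field_simps)
qed

lemma edge_W_pos:
  assumes "edge_eig l mu f f'" "edge_eig l lam g g'" "l > 0"
    and "\<forall>x\<in>{0<..<l}. 0 < c * (f x * g x)" "lam \<noteq> mu"
  shows "c * (lam - mu) * ((f' l * g l - f l * g' l) - (f' 0 * g 0 - f 0 * g' 0)) > 0"
proof -
  obtain f2 where f: "\<forall>x\<in>{0..l}. (f has_real_derivative f' x) (at x within {0..l}) \<and>
        (f' has_real_derivative f2 x) (at x within {0..l}) \<and> - f2 x = mu * f x"
    using assms(1) unfolding edge_eig_def by blast
  obtain g2 where g: "\<forall>x\<in>{0..l}. (g has_real_derivative g' x) (at x within {0..l}) \<and>
        (g' has_real_derivative g2 x) (at x within {0..l}) \<and> - g2 x = lam * g x"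
    using assms(2) unfolding edge_eig_def by blast
  have "\<exists>x\<in>{0<..<l}. (f' l * g l - f l * g' l) - (f' 0 * g 0 - f 0 * g' 0) = (\<lambda>x. (*) ((lam - mu) * (f x * g x))) x (l - 0)"
  proof (rule mvt_simple[OF assms(3)])
    fix x assume "0 \<le> x" "x \<le> l"
    then show "((\<lambda>x. f' x * g x - f x * g' x) has_derivative (\<lambda>x. (*) ((lam - mu) * (f x * g x))) x) (at x within {0..l})"
      using W_deriv[OF f g, of x] unfolding has_field_derivative_def by simp
  qed
  then obtain x where x: "x \<in> {0<..<l}"
    and eq: "(f' l * g l - f l * g' l) - (f' 0 * g 0 - f 0 * g' 0) = l * ((lam - mu) * (f x * g x))" by (auto simp: mult.commute)
  have e1: "c * (lam - mu) * (l * ((lam - mu) * (f x * g x))) = l * ((lam - mu) * (lam - mu)) * (c * (f x * g x))"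
    by (simp add: algebra_simps)
  have p1: "l * ((lam - mu) * (lam - mu)) * (c * (f x * g x)) > 0"
  proof -
    have "(lam - mu) * (lam - mu) > 0" using assms(5) by (metis eq_iff_diff_eq_0 not_real_square_gt_zero)
    moreover have "c * (f x * g x) > 0" using assms(4) x by auto
    ultimately show ?thesis using assms(3) by simp
  qed
  show ?thesis unfolding eq using e1 p1 by linarith
qed



definition Hf :: "nat \<Rightarrow> (nat \<Rightarrow> real) \<Rightarrow> real \<Rightarrow> real" where
 "Hf i l m = (\<Sum>j\<in>{1..4}. S' m (l j) / S m (l j)) + (if i = 2 then C' m (l 0) / C m (l 0) else 0)"

definition good :: "nat \<Rightarrow> (nat \<Rightarrow> real) \<Rightarrow> real \<Rightarrow> bool" where
 "good i l m \<longleftrightarrow> m \<le> 0 \<or> ((\<forall>j\<in>{1..4}. sqrt m * l j < pi) \<and> (i = 2 \<longrightarrow> sqrt m * l 0 < pi/2))"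

lemma P_eq: "k > 0 \<Longrightarrow> Hf i l (k^2) = (\<Sum>j\<in>{1..4}. k * cos (k * l j) / sin (k * l j))
   + (if i = 2 then - (k * sin (k * l 0) / cos (k * l 0)) else 0)"
  by (simp add: Hf_def S_def S'_def C_def C'_def real_sqrt_abs)

lemma N_eq: "k > 0 \<Longrightarrow> Hf i l (-(k^2)) = (\<Sum>j\<in>{1..4}. k * cosh (k * l j) / sinh (k * l j))
   + (if i = 2 then k * sinh (k * l 0) / cosh (k * l 0) else 0)"
  by (simp add: Hf_def S_def S'_def C_def C'_def real_sqrt_abs)

lemma H0_eq: "Hf i l 0 = (\<Sum>j\<in>{1..4}. 1 / l j)"
  by (simp add: Hf_def S_def S'_def C_def C'_def)

lemma xcos_le_sin: assumes "0 \<le> x" "x \<le> pi" shows "x * cos x \<le> sin x"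
proof -
  have "(\<lambda>x. sin x - x * cos x) 0 \<le> (\<lambda>x. sin x - x * cos x) x"
  proof (rule DERIV_nonneg_imp_nondecreasing[OF assms(1)])
    fix y assume y: "0 \<le> y" "y \<le> x"
    have "((\<lambda>x. sin x - x * cos x) has_real_derivative cos y - (1 * cos y + y * (- sin y))) (at y)"
      by (auto intro!: derivative_eq_intros)
    moreover have "0 \<le> cos y - (1 * cos y + y * (- sin y))"
      using y assms sin_ge_zero[of y] by simp
    ultimately show "\<exists>d. ((\<lambda>x. sin x - x * cos x) has_real_derivative d) (at y) \<and> 0 \<le> d" by blast
  qed
  then show ?thesis by simp
qed

lemma kcot_le: assumes "k > 0" "l > 0" "k * l < pi" shows "k * cos (k * l) / sin (k * l) \<le> 1 / l"
proof -
  have s: "sin (k * l) > 0" using assms by (intro sin_gt_zero) auto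
  have "(k * l) * cos (k * l) \<le> sin (k * l)" using assms by (intro xcos_le_sin) auto
  then show ?thesis using s assms by (simp add: field_simps)
qed

lemma ev_pos: "eventually (\<lambda>k::real. 0 < k) (at_right 0)"
  unfolding eventually_at_right_field by (rule exI[of _ 1]) auto

lemma lim_sin: fixes l :: real assumes "l \<noteq> 0" shows "((\<lambda>k. k * cos (k * l) / sin (k * l)) \<longlongrightarrow> 1 / l) (at_right 0)"
proof -
  have "((\<lambda>k. sin (k * l)) has_real_derivative l) (at 0)"
    by (auto intro!: derivative_eq_intros)
  then have "((\<lambda>k. (sin (k * l) - sin (0 * l)) / (k - 0)) \<longlongrightarrow> l) (at 0)"
    unfolding has_field_derivative_iff by simp
  then have "((\<lambda>k. sin (k * l) / k) \<longlongrightarrow> l) (at 0)" by simp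
  then have "((\<lambda>k. sin (k * l) / k) \<longlongrightarrow> l) (at_right 0)"
    by (rule tendsto_mono[OF at_within_le_at])
  then have "((\<lambda>k. cos (k * l) / (sin (k * l) / k)) \<longlongrightarrow> cos (0 * l) / l) (at_right 0)"
    using assms by (intro tendsto_intros) auto
  then have "((\<lambda>k. cos (k * l) / (sin (k * l) / k)) \<longlongrightarrow> 1 / l) (at_right 0)" by simp
  then show ?thesis
    by (rule Lim_transform_eventually) (rule eventually_mono[OF ev_pos], simp)
qed

lemma lim_sinh: fixes l :: real assumes "l \<noteq> 0" shows "((\<lambda>k. k * cosh (k * l) / sinh (k * l)) \<longlongrightarrow> 1 / l) (at_right 0)"
proof -
  have "((\<lambda>k. sinh (k * l)) has_real_derivative l) (at 0)"
    by (auto intro!: derivative_eq_intros)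
  then have "((\<lambda>k. (sinh (k * l) - sinh (0 * l)) / (k - 0)) \<longlongrightarrow> l) (at 0)"
    unfolding has_field_derivative_iff by simp
  then have "((\<lambda>k. sinh (k * l) / k) \<longlongrightarrow> l) (at 0)" by simp
  then have "((\<lambda>k. sinh (k * l) / k) \<longlongrightarrow> l) (at_right 0)"
    by (rule tendsto_mono[OF at_within_le_at])
  then have "((\<lambda>k. cosh (k * l) / (sinh (k * l) / k)) \<longlongrightarrow> cosh (0 * l) / l) (at_right 0)"
    using assms by (intro tendsto_intros) auto
  then have "((\<lambda>k. cosh (k * l) / (sinh (k * l) / k)) \<longlongrightarrow> 1 / l) (at_right 0)" by simp
  then show ?thesis
    by (rule Lim_transform_eventually) (rule eventually_mono[OF ev_pos], simp)
qed

lemma lim_P: assumes "\<forall>j\<in>{1..4}. l j > 0"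
  shows "((\<lambda>k. Hf i l (k^2)) \<longlongrightarrow> (\<Sum>j\<in>{1..4}. 1 / l j)) (at_right 0)"
proof -
  have a: "((\<lambda>k. \<Sum>j\<in>{1..4}. k * cos (k * l j) / sin (k * l j)) \<longlongrightarrow> (\<Sum>j\<in>{1..4}. 1 / l j)) (at_right 0)"
  proof (intro tendsto_sum lim_sin)
    fix j :: nat assume "j \<in> {1..4}" then show "l j \<noteq> 0" using assms by (metis less_irrefl)
  qed
  have b: "((\<lambda>k. if i = 2 then - (k * sin (k * l 0) / cos (k * l 0)) else 0) \<longlongrightarrow> 0) (at_right 0)"
  proof (cases "i = 2")
    case True
    have "((\<lambda>k. - (k * sin (k * l 0) / cos (k * l 0))) \<longlongrightarrow> - (0 * sin (0 * l 0) / cos (0 * l 0))) (at_right 0)"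
      by (intro tendsto_intros) auto
    then show ?thesis using True by simp
  qed simp
  have L: "((\<lambda>k. (\<Sum>j\<in>{1..4}. k * cos (k * l j) / sin (k * l j)) + (if i = 2 then - (k * sin (k * l 0) / cos (k * l 0)) else 0))
     \<longlongrightarrow> (\<Sum>j\<in>{1..4}. 1 / l j)) (at_right 0)"
    using tendsto_add[OF a b] by (simp only: add_0_right)
  have ev: "eventually (\<lambda>k. (\<Sum>j\<in>{1..4}. k * cos (k * l j) / sin (k * l j)) + (if i = 2 then - (k * sin (k * l 0) / cos (k * l 0)) else 0) = Hf i l (k^2)) (at_right 0)"
    by (rule eventually_mono[OF ev_pos]) (rule P_eq[symmetric])
  show ?thesis using Lim_transform_eventually[OF L ev] .
qed

lemma lim_N: assumes "\<forall>j\<in>{1..4}. l j > 0"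
  shows "((\<lambda>k. Hf i l (-(k^2))) \<longlongrightarrow> (\<Sum>j\<in>{1..4}. 1 / l j)) (at_right 0)"
proof -
  have a: "((\<lambda>k. \<Sum>j\<in>{1..4}. k * cosh (k * l j) / sinh (k * l j)) \<longlongrightarrow> (\<Sum>j\<in>{1..4}. 1 / l j)) (at_right 0)"
  proof (intro tendsto_sum lim_sinh)
    fix j :: nat assume "j \<in> {1..4}" then show "l j \<noteq> 0" using assms by (metis less_irrefl)
  qed
  have b: "((\<lambda>k. if i = 2 then k * sinh (k * l 0) / cosh (k * l 0) else 0) \<longlongrightarrow> 0) (at_right 0)"
  proof (cases "i = 2")
    case True
    have "((\<lambda>k. k * sinh (k * l 0) / cosh (k * l 0)) \<longlongrightarrow> 0 * sinh (0 * l 0) / cosh (0 * l 0)) (at_right 0)"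
      by (intro tendsto_intros) auto
    then show ?thesis using True by simp
  qed simp
  have L: "((\<lambda>k. (\<Sum>j\<in>{1..4}. k * cosh (k * l j) / sinh (k * l j)) + (if i = 2 then k * sinh (k * l 0) / cosh (k * l 0) else 0))
     \<longlongrightarrow> (\<Sum>j\<in>{1..4}. 1 / l j)) (at_right 0)"
    using tendsto_add[OF a b] by (simp only: add_0_right)
  have ev: "eventually (\<lambda>k. (\<Sum>j\<in>{1..4}. k * cosh (k * l j) / sinh (k * l j)) + (if i = 2 then k * sinh (k * l 0) / cosh (k * l 0) else 0) = Hf i l (-(k^2))) (at_right 0)"
    by (rule eventually_mono[OF ev_pos]) (rule N_eq[symmetric])
  show ?thesis using Lim_transform_eventually[OF L ev] .
qed



lemma cot_big_neg:
  fixes L M :: real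
  assumes "L > 0" "M > 0"
  shows "(pi - min (pi/4) (1/(L*M)))/L * cos ((pi - min (pi/4) (1/(L*M)))/L * L)
          / sin ((pi - min (pi/4) (1/(L*M)))/L * L) \<le> - M"
proof -
  define t where "t = min (pi/4) (1/(L*M))"
  define k where "k = (pi - t)/L"
  have t0: "t > 0" using assms unfolding t_def by auto
  have t1: "t \<le> pi/4" unfolding t_def by auto
  have "t \<le> 1/(L*M)" unfolding t_def by simp
  then have t2: "t * (L * M) \<le> 1" using assms by (simp add: le_divide_eq)
  have kL: "k * L = pi - t" unfolding k_def using assms by simp
  have s: "sin (k * L) = sin t" unfolding kL by simp
  have c: "cos (k * L) = - cos t" unfolding kL by (simp add: cos_pi_minus)
  have st: "0 < sin t" using t0 t1 pi_gt3 by (intro sin_gt_zero) auto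
  have st2: "sin t \<le> t" using t0 by (intro sin_x_le_x) auto
  have ct: "cos t \<ge> 1/2"
  proof -
    have "cos (pi/3) \<le> cos t" using t0 t1 pi_gt3 by (intro cos_monotone_0_pi_le) auto
    then show ?thesis by (simp add: cos_60)
  qed
  have k2: "k * L \<ge> 2" using kL t1 pi_gt3 by linarith
  have "M * sin t \<le> M * t" using st2 assms by simp
  also have "M * t \<le> 1 / L" using t2 assms by (simp add: field_simps)
  also have "1 / L \<le> k * cos t"
  proof -
    have "2 * (1/2) \<le> (k * L) * cos t"
      by (rule mult_mono) (use k2 ct in auto)
    then show ?thesis using assms by (simp add: field_simps)
  qed
  finally have "M * sin t \<le> k * cos t" .
  then have "M \<le> k * cos t / sin t" using st by (simp add: field_simps)
  then have "k * cos (k * L) / sin (k * L) \<le> - M" unfolding s c by simp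
  then show ?thesis unfolding k_def t_def .
qed

lemma tan_big:
  fixes L M :: real
  assumes "L > 0" "M > 0"
  shows "(pi/2 - min (pi/4) (1/(4*L*M)))/L * sin ((pi/2 - min (pi/4) (1/(4*L*M)))/L * L)
          / cos ((pi/2 - min (pi/4) (1/(4*L*M)))/L * L) \<ge> M"
proof -
  define t where "t = min (pi/4) (1/(4*L*M))"
  define k where "k = (pi/2 - t)/L"
  have t0: "t > 0" using assms unfolding t_def by auto
  have t1: "t \<le> pi/4" unfolding t_def by auto
  have "t \<le> 1/(4*L*M)" unfolding t_def by simp
  then have t2: "t * (4 * L * M) \<le> 1" using assms by (simp add: le_divide_eq)
  have kL: "k * L = pi/2 - t" unfolding k_def using assms by simp
  have s: "sin (k * L) = cos t" unfolding kL by (simp add: sin_diff)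
  have c: "cos (k * L) = sin t" unfolding kL by (simp add: cos_diff)
  have st: "0 < sin t" using t0 t1 pi_gt3 by (intro sin_gt_zero) auto
  have st2: "sin t \<le> t" using t0 by (intro sin_x_le_x) auto
  have ct: "cos t \<ge> 1/2"
  proof -
    have "cos (pi/3) \<le> cos t" using t0 t1 pi_gt3 by (intro cos_monotone_0_pi_le) auto
    then show ?thesis by (simp add: cos_60)
  qed
  have k2: "k * L \<ge> 1/2" using kL t1 pi_gt3 by linarith
  have "M * sin t \<le> M * t" using st2 assms by simp
  also have "M * t \<le> 1 / (4 * L)" using t2 assms by (simp add: field_simps)
  also have "1 / (4 * L) \<le> k * cos t"
  proof -
    have "(1/2) * (1/2) \<le> (k * L) * cos t"
      by (rule mult_mono) (use k2 ct in auto)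
    then show ?thesis using assms by (simp add: field_simps)
  qed
  finally have "M * sin t \<le> k * cos t" .
  then have "M \<le> k * cos t / sin t" using st by (simp add: field_simps)
  then have "k * sin (k * L) / cos (k * L) \<ge> M" unfolding s c by simp
  then show ?thesis unfolding k_def t_def .
qed


lemma kcoth_ge: fixes k l :: real assumes "k > 0" "l > 0" shows "k \<le> k * cosh (k * l) / sinh (k * l)"
proof -
  have sp: "sinh (k * l) > 0" using assms by (metis sinh_real_pos_iff mult_pos_pos)
  have "sinh (k * l) \<le> cosh (k * l)" by (rule sinh_le_cosh_real)
  then have "1 \<le> cosh (k * l) / sinh (k * l)" using sp by simp
  then have "k * 1 \<le> k * (cosh (k * l) / sinh (k * l))" using assms by (intro mult_left_mono) auto
  then show ?thesis by simp
qed

lemma tanh_nonneg: fixes k l :: real assumes "k > 0" "l > 0" shows "0 \<le> k * sinh (k * l) / cosh (k * l)"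
proof -
  have "sinh (k * l) > 0" using assms by (metis sinh_real_pos_iff mult_pos_pos)
  then show ?thesis using assms cosh_real_pos[of "k*l"] by simp
qed

lemma obtain_right: assumes "eventually P (at_right (0::real))" "b > 0" shows "\<exists>k. 0 < k \<and> k < b \<and> P k"
proof -
  obtain b' where b': "b' > 0" "\<forall>y>0. y < b' \<longrightarrow> P y" using assms(1) unfolding eventually_at_right_field by auto
  show ?thesis using b' assms(2) by (intro exI[of _ "min b b' / 2"]) auto
qed

lemma exists_root:
  assumes i: "i \<in> {1,2}" and lp: "\<forall>j\<in>edges i. l j > 0"
  shows "\<exists>m. good i l m \<and> Hf i l m = T"
proof -
  have l14: "\<forall>j\<in>{1..4}. l j > 0" using lp i by (auto simp: edges_def)
  have l0: "i = 2 \<Longrightarrow> l 0 > 0" using lp by (auto simp: edges_def)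
  define H0 where "H0 = (\<Sum>j\<in>{1..4}. 1 / l j)"
  consider "T = H0" | "H0 < T" | "T < H0" by linarith
  then show ?thesis
  proof cases
    case 1 then show ?thesis by (intro exI[of _ 0]) (simp add: good_def H0_eq H0_def)
  next
    case 2
    have "eventually (\<lambda>k. Hf i l (-(k^2)) < T) (at_right 0)"
      using order_tendstoD(2)[OF lim_N[OF l14] 2[unfolded H0_def]] .
    then obtain k0 where k0: "0 < k0" "Hf i l (-(k0^2)) < T" using obtain_right[of _ 1] by auto
    define k1 where "k1 = k0 + \<bar>T\<bar> + 1"
    have k01: "k0 \<le> k1" unfolding k1_def by simp
    have k1p: "k1 > 0" using k0 k01 by simp
    have "T < Hf i l (-(k1^2))"
    proof -
      have "(\<Sum>j\<in>{1..4::nat}. k1) \<le> (\<Sum>j\<in>{1..4}. k1 * cosh (k1 * l j) / sinh (k1 * l j))"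
      proof (rule sum_mono)
        fix j :: nat assume "j \<in> {1..4}"
        then show "k1 \<le> k1 * cosh (k1 * l j) / sinh (k1 * l j)" using kcoth_ge[OF k1p] l14 by blast
      qed
      moreover have "0 \<le> (if i = 2 then k1 * sinh (k1 * l 0) / cosh (k1 * l 0) else 0)"
        using tanh_nonneg[OF k1p] l0 by auto
      ultimately have "4 * k1 \<le> Hf i l (-(k1^2))" using N_eq[OF k1p, of i l] by simp
      moreover have "T < 4 * k1" unfolding k1_def using k0 by (smt (verit) abs_ge_self abs_ge_zero)
      ultimately show ?thesis by linarith
    qed
    moreover have "continuous_on {k0..k1} (\<lambda>k. Hf i l (-(k^2)))"
    proof -
      have nz: "sinh (x * l j) \<noteq> 0" if "x \<in> {k0..k1}" "j \<in> {1..4}" for x j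
        using that k0 l14 by (metis atLeastAtMost_iff less_le_trans mult_pos_pos order.irrefl sinh_real_pos_iff)
      have nz0: "cosh (x * l 0) \<noteq> 0" for x using cosh_real_pos[of "x * l 0"] by simp
      have "continuous_on {k0..k1} (\<lambda>k. (\<Sum>j\<in>{1..4}. k * cosh (k * l j) / sinh (k * l j))
             + (if i = 2 then k * sinh (k * l 0) / cosh (k * l 0) else 0))"
        using nz nz0 by (cases "i = 2") (auto intro!: continuous_intros)
      moreover have "continuous_on {k0..k1} (\<lambda>k. Hf i l (-(k^2))) = continuous_on {k0..k1} (\<lambda>k. (\<Sum>j\<in>{1..4}. k * cosh (k * l j) / sinh (k * l j))
             + (if i = 2 then k * sinh (k * l 0) / cosh (k * l 0) else 0))"
      proof (rule continuous_on_cong[OF refl])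
        fix x assume "x \<in> {k0..k1}"
        then have "x > 0" using k0 by auto
        then show "Hf i l (-(x^2)) = (\<Sum>j\<in>{1..4}. x * cosh (x * l j) / sinh (x * l j))
             + (if i = 2 then x * sinh (x * l 0) / cosh (x * l 0) else 0)" by (rule N_eq)
      qed
      ultimately show ?thesis by simp
    qed
    ultimately obtain k where k: "k0 \<le> k" "k \<le> k1" "Hf i l (-(k^2)) = T"
      using IVT'[of "\<lambda>k. Hf i l (-(k^2))" k0 T k1] k0 k01 by force
    show ?thesis by (rule exI[of _ "-(k^2)"]) (use k in \<open>simp add: good_def\<close>)
  next
    case 3
    define kp where "kp = min (min (min (pi / l 1) (pi / l 2)) (min (pi / l 3) (pi / l 4)))
                          (if i = 2 then pi / (2 * l 0) else pi / l 1)"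
    have l1234: "l 1 > 0" "l 2 > 0" "l 3 > 0" "l 4 > 0" using l14 by auto
    have j14: "j = 1 \<or> j = 2 \<or> j = 3 \<or> j = 4" if "j \<in> {1..4::nat}" for j using that by auto
    have kpos: "kp > 0" unfolding kp_def using l1234 l0 by auto
    have kp_le_j: "kp \<le> pi / l j" if "j \<in> {1..4}" for j
      using j14[OF that] unfolding kp_def by auto
    have kp_le_0: "kp \<le> pi / (2 * l 0)" if "i = 2" unfolding kp_def using that by auto
    have kpl_j: "k * l j < pi" if "0 < k" "k < kp" "j \<in> {1..4}" for k j
    proof -
      have "k < pi / l j" using kp_le_j[OF that(3)] that by linarith
      then show ?thesis using l14 that(3) by (simp add: field_simps)
    qed
    have kpl_0: "k * l 0 < pi / 2" if "0 < k" "k < kp" "i = 2" for k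
    proof -
      have "k < pi / (2 * l 0)" using kp_le_0[OF that(3)] that by linarith
      then show ?thesis using l0[OF that(3)] by (simp add: field_simps)
    qed
    have kp_cases: "(\<exists>j\<in>{1..4}. kp = pi / l j) \<or> (i = 2 \<and> kp = pi / (2 * l 0))"
      unfolding kp_def by (auto simp: min_def)
    have sinpos: "sin (k * l j) > 0" if "0 < k" "k < kp" "j \<in> {1..4}" for k j
      using kpl_j[OF that] that(1,3) l14 by (intro sin_gt_zero) auto
    have cospos: "cos (k * l 0) > 0" if "0 < k" "k < kp" "i = 2" for k
      using kpl_0[OF that] mult_pos_pos[OF that(1) l0[OF that(3)]] pi_gt_zero by (intro cos_gt_zero_pi) linarith+
    have termle: "k * cos (k * l j) / sin (k * l j) \<le> 1 / l j" if "0 < k" "k < kp" "j \<in> {1..4}" for k j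
      using kcot_le[OF that(1) _ kpl_j[OF that]] l14 that(3) by auto
    have tanpos: "k * sin (k * l 0) / cos (k * l 0) \<ge> 0" if "0 < k" "k < kp" "i = 2" for k
      using sin_gt_zero[of "k * l 0"] kpl_0[OF that] cospos[OF that] that l0[OF that(3)] pi_gt3 by auto
    have "eventually (\<lambda>k. T < Hf i l (k^2)) (at_right 0)"
      using order_tendstoD(1)[OF lim_P[OF l14] 3[unfolded H0_def]] .
    then obtain k0 where k0: "0 < k0" "k0 < kp / 2" "T < Hf i l (k0^2)"
      using obtain_right[of _ "kp/2"] kpos by auto
    define M where "M = \<bar>H0 - T\<bar> + 1"
    have Mpos: "M > 0" and MH: "H0 - T < M" unfolding M_def using abs_ge_self[of "H0 - T"] by auto
    have "\<exists>k1. k0 \<le> k1 \<and> k1 < kp \<and> Hf i l (k1^2) < T"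
      using kp_cases
    proof
      assume "\<exists>j\<in>{1..4}. kp = pi / l j"
      then obtain js where js: "js \<in> {1..4}" "kp = pi / l js" by blast
      define L where "L = l js"
      have Lp: "L > 0" using l14 js unfolding L_def by auto
      define t where "t = min (pi/4) (1/(L*M))"
      define k1 where "k1 = (pi - t)/L"
      have t0: "t > 0" using Lp Mpos unfolding t_def by auto
      have t1: "t \<le> pi/4" unfolding t_def by auto
      have k1kp: "k1 < kp" unfolding k1_def js(2) L_def[symmetric] using t0 Lp by (simp add: divide_strict_right_mono)
      have "kp / 2 \<le> k1" unfolding k1_def js(2) L_def[symmetric] using t0 t1 Lp by (simp add: field_simps)
      then have k01: "k0 \<le> k1" using k0 by linarith
      have k1p: "k1 > 0" using k01 k0 by linarith
      have fj: "k1 * cos (k1 * L) / sin (k1 * L) \<le> - M"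
        using cot_big_neg[OF Lp Mpos] unfolding k1_def t_def .
      have sum1: "(\<Sum>j\<in>{1..4}. k1 * cos (k1 * l j) / sin (k1 * l j))
          = k1 * cos (k1 * L) / sin (k1 * L) + (\<Sum>j\<in>{1..4} - {js}. k1 * cos (k1 * l j) / sin (k1 * l j))"
        unfolding L_def by (rule sum.remove) (use js in auto)
      have sum2: "H0 = 1 / L + (\<Sum>j\<in>{1..4} - {js}. 1 / l j)"
        unfolding L_def H0_def by (rule sum.remove) (use js in auto)
      have sum3: "(\<Sum>j\<in>{1..4} - {js}. k1 * cos (k1 * l j) / sin (k1 * l j)) \<le> (\<Sum>j\<in>{1..4} - {js}. 1 / l j)"
        by (rule sum_mono) (use termle[OF k1p k1kp] in auto)
      have tt: "(if i = 2 then - (k1 * sin (k1 * l 0) / cos (k1 * l 0)) else 0) \<le> 0"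
        using tanpos[OF k1p k1kp] by auto
      have "Hf i l (k1^2) \<le> - M + (H0 - 1 / L)"
        unfolding P_eq[OF k1p] using sum1 sum2 sum3 tt fj by linarith
      also have "\<dots> < T" using MH Lp by (smt (verit) divide_pos_pos)
      finally show ?thesis using k01 k1kp by blast
    next
      assume B: "i = 2 \<and> kp = pi / (2 * l 0)"
      define L where "L = l 0"
      have Lp: "L > 0" using l0 B unfolding L_def by auto
      define t where "t = min (pi/4) (1/(4*L*M))"
      define k1 where "k1 = (pi/2 - t)/L"
      have t0: "t > 0" using Lp Mpos unfolding t_def by auto
      have t1: "t \<le> pi/4" unfolding t_def by auto
      have kpL: "kp = (pi/2)/L" using B unfolding L_def by simp
      have k1kp: "k1 < kp" unfolding k1_def kpL using t0 Lp by (intro divide_strict_right_mono) auto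
      have "kp / 2 \<le> k1" unfolding k1_def kpL using t1 Lp by (simp add: field_simps)
      then have k01: "k0 \<le> k1" using k0 by linarith
      have k1p: "k1 > 0" using k01 k0 by linarith
      have fj: "k1 * sin (k1 * L) / cos (k1 * L) \<ge> M"
        using tan_big[OF Lp Mpos] unfolding k1_def t_def .
      have sum3: "(\<Sum>j\<in>{1..4}. k1 * cos (k1 * l j) / sin (k1 * l j)) \<le> H0"
        unfolding H0_def by (rule sum_mono) (use termle[OF k1p k1kp] in auto)
      have "Hf i l (k1^2) \<le> H0 - M"
        unfolding P_eq[OF k1p] using sum3 fj B unfolding L_def by simp
      also have "\<dots> < T" using MH by simp
      finally show ?thesis using k01 k1kp by blast
    qed
    then obtain k1 where k1: "k0 \<le> k1" "k1 < kp" "Hf i l (k1^2) < T" by blast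
    have "continuous_on {k0..k1} (\<lambda>k. Hf i l (k^2))"
    proof -
      have nz: "sin (x * l j) \<noteq> 0" if "x \<in> {k0..k1}" "j \<in> {1..4}" for x j
        using sinpos[of x j] that k0 k1 by fastforce
      have nz0: "cos (x * l 0) \<noteq> 0" if "x \<in> {k0..k1}" "i = 2" for x
        using cospos[of x] that k0 k1 by fastforce
      have "continuous_on {k0..k1} (\<lambda>k. (\<Sum>j\<in>{1..4}. k * cos (k * l j) / sin (k * l j))
             + (if i = 2 then - (k * sin (k * l 0) / cos (k * l 0)) else 0))"
        using nz nz0 by (cases "i = 2") (auto intro!: continuous_intros)
      moreover have "continuous_on {k0..k1} (\<lambda>k. Hf i l (k^2)) = continuous_on {k0..k1} (\<lambda>k. (\<Sum>j\<in>{1..4}. k * cos (k * l j) / sin (k * l j))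
             + (if i = 2 then - (k * sin (k * l 0) / cos (k * l 0)) else 0))"
      proof (rule continuous_on_cong[OF refl])
        fix x assume "x \<in> {k0..k1}"
        then have "x > 0" using k0 by auto
        then show "Hf i l (x^2) = (\<Sum>j\<in>{1..4}. x * cos (x * l j) / sin (x * l j))
             + (if i = 2 then - (x * sin (x * l 0) / cos (x * l 0)) else 0)" by (rule P_eq)
      qed
      ultimately show ?thesis by simp
    qed
    then obtain k where k: "k0 \<le> k" "k \<le> k1" "Hf i l (k^2) = T"
      using IVT2'[of "\<lambda>k. Hf i l (k^2)" k1 T k0] k0 k1 by force
    have kk: "0 < k" "k < kp" using k k0 k1 by auto
    have "good i l (k^2)" unfolding good_def using kpl_j[OF kk] kpl_0[OF kk] kk by (auto simp: real_sqrt_abs)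
    then show ?thesis using k by blast
  qed
qed



lemma eigfun_D:
  assumes "is_eigfun_B i l gA m \<phi>"
  obtains \<phi>' where "\<forall>j\<in>edges i. edge_eig (l j) m (\<phi> j) (\<phi>' j)" "\<forall>j\<in>{1..4}. \<phi> j 0 = 0"
    "\<forall>j\<in>{1..4}. \<phi> j (l j) = \<phi> 1 (l 1)" "i = 2 \<longrightarrow> \<phi> 0 0 = \<phi> 1 (l 1)"
    "(if i = 2 then \<phi>' 0 0 else 0) + (\<Sum>j\<in>{1..4}. - \<phi>' j (l j)) = coupling i gA * \<phi> 1 (l 1)"
    "i = 2 \<longrightarrow> \<phi>' 0 (l 0) = 0" "\<exists>j\<in>edges i. \<exists>x\<in>{0..l j}. \<phi> j x \<noteq> 0"
  using assms unfolding is_eigfun_B_def by blast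

lemma edges14: "i \<in> {1,2} \<Longrightarrow> j \<in> {1..4} \<Longrightarrow> j \<in> edges i" by (auto simp: edges_def)
lemma edges0: "i = 2 \<Longrightarrow> 0 \<in> edges i" by (auto simp: edges_def)
lemma edges_cases: "i \<in> {1,2} \<Longrightarrow> j \<in> edges i \<Longrightarrow> (j = 0 \<and> i = 2) \<or> j \<in> {1..4}"
  by (auto simp: edges_def split: if_splits)

lemma S0: "S m 0 = 0" by (simp add: S_def)
lemma C'0: "C' m 0 = 0" by (simp add: C'_def)

lemma good_S_pos: assumes "good i l m" "j \<in> {1..4}" "0 < x" "x \<le> l j" shows "S m x > 0"
proof -
  consider "m > 0" | "m = 0" | "m < 0" by linarith
  then show ?thesis
  proof cases
    case 1
    then have "sqrt m * l j < pi" using assms(1,2) unfolding good_def by auto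
    moreover have "sqrt m * x \<le> sqrt m * l j" using assms(4) 1 by (simp add: mult_left_mono)
    moreover have "sqrt m * x > 0" using 1 assms(3) by simp
    ultimately have "sin (sqrt m * x) > 0" by (intro sin_gt_zero) linarith+
    then show ?thesis using 1 unfolding S_def by simp
  next
    case 2 then show ?thesis using assms unfolding S_def by simp
  next
    case 3 then show ?thesis using assms unfolding S_def by (simp add: sinh_real_pos_iff)
  qed
qed

lemma good_C_pos: assumes "good i l m" "i = 2" "0 \<le> y" "y \<le> l 0" shows "C m y > 0"
proof -
  consider "m > 0" | "m = 0" | "m < 0" by linarith
  then show ?thesis
  proof cases
    case 1
    then have "sqrt m * l 0 < pi/2" using assms(1,2) unfolding good_def by auto
    moreover have "sqrt m * y \<le> sqrt m * l 0" using assms(4) 1 by (simp add: mult_left_mono)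
    moreover have "sqrt m * y \<ge> 0" using 1 assms(3) by simp
    ultimately have "cos (sqrt m * y) > 0" using pi_gt_zero by (intro cos_gt_zero_pi) linarith+
    then show ?thesis using 1 unfolding C_def by simp
  next
    case 2 then show ?thesis using assms unfolding C_def by simp
  next
    case 3 then show ?thesis using assms unfolding C_def by simp
  qed
qed

definition Phi :: "(nat \<Rightarrow> real) \<Rightarrow> real \<Rightarrow> nat \<Rightarrow> real \<Rightarrow> real" where
  "Phi l m j = (if j = 0 then (\<lambda>x. (1 / C m (l 0)) * C m (l 0 - x)) else (\<lambda>x. (1 / S m (l j)) * S m x))"
definition Phi' :: "(nat \<Rightarrow> real) \<Rightarrow> real \<Rightarrow> nat \<Rightarrow> real \<Rightarrow> real" where
  "Phi' l m j = (if j = 0 then (\<lambda>x. - (1 / C m (l 0)) * C' m (l 0 - x)) else (\<lambda>x. (1 / S m (l j)) * S' m x))"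

lemma Phi_eig:
  assumes i: "i \<in> {1,2}" and lp: "\<forall>j\<in>edges i. l j > 0" and g: "good i l m"
    and h: "Hf i l m = - coupling i gA"
  shows "is_eigfun_B i l gA m (Phi l m)"
proof -
  have Sl: "S m (l j) > 0" if "j \<in> {1..4}" for j
    using good_S_pos[OF g that] lp edges14[OF i that] by auto
  have Cl: "C m (l 0) > 0" if "i = 2"
    using good_C_pos[OF g that] lp edges0[OF that] by auto
  have 1: "\<forall>j\<in>edges i. edge_eig (l j) m (Phi l m j) (Phi' l m j)"
  proof
    fix j assume j: "j \<in> edges i"
    show "edge_eig (l j) m (Phi l m j) (Phi' l m j)"
    proof (cases "j = 0")
      case True
      have "Phi l m j = (\<lambda>x. (1 / C m (l 0)) * C m (l 0 - x))" "Phi' l m j = (\<lambda>x. - (1 / C m (l 0)) * C' m (l 0 - x))"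
        using True unfolding Phi_def Phi'_def by auto
      then show ?thesis using True by (simp only:) (rule edge_eig_C)
    next
      case False
      have "Phi l m j = (\<lambda>x. (1 / S m (l j)) * S m x)" "Phi' l m j = (\<lambda>x. (1 / S m (l j)) * S' m x)"
        using False unfolding Phi_def Phi'_def by auto
      then show ?thesis by (simp only:) (rule edge_eig_S)
    qed
  qed
  have 2: "\<forall>j\<in>{1..4}. Phi l m j 0 = 0" by (auto simp: Phi_def S0)
  have 3: "\<forall>j\<in>{1..4}. Phi l m j (l j) = Phi l m 1 (l 1)"
  proof
    fix j :: nat assume j: "j \<in> {1..4}"
    have "j \<noteq> 0" "(1::nat) \<in> {1..4}" using j by auto
    then show "Phi l m j (l j) = Phi l m 1 (l 1)" using Sl[OF j] Sl[of 1] by (simp add: Phi_def)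
  qed
  have 4: "i = 2 \<longrightarrow> Phi l m 0 0 = Phi l m 1 (l 1)"
    using Sl[of 1] Cl by (auto simp: Phi_def)
  have P11: "Phi l m 1 (l 1) = 1" using Sl[of 1] by (auto simp: Phi_def)
  have 5: "(if i = 2 then Phi' l m 0 0 else 0) + (\<Sum>j\<in>{1..4}. - Phi' l m j (l j)) = coupling i gA * Phi l m 1 (l 1)"
  proof -
    have "(\<Sum>j\<in>{1..4}. - Phi' l m j (l j)) = - (\<Sum>j\<in>{1..4}. S' m (l j) / S m (l j))"
      by (simp add: Phi'_def sum_negf)
    moreover have "(if i = 2 then Phi' l m 0 0 else 0) = - (if i = 2 then C' m (l 0) / C m (l 0) else 0)"
      by (simp add: Phi'_def)
    ultimately show ?thesis using h P11 unfolding Hf_def by simp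
  qed
  have 6: "i = 2 \<longrightarrow> Phi' l m 0 (l 0) = 0" by (simp add: Phi'_def C'0)
  have 7: "\<exists>j\<in>edges i. \<exists>x\<in>{0..l j}. Phi l m j x \<noteq> 0"
    using P11 edges14[OF i, of 1] lp by (intro bexI[of _ 1] bexI[of _ "l 1"]) auto
  show ?thesis unfolding is_eigfun_B_def using 1 2 3 4 5 6 7 by blast
qed



lemma edge_eig_S1: "edge_eig l m (S m) (S' m)"
  using edge_eig_S[of l m 1] by simp

lemma edge_eig_C1: "edge_eig l m (\<lambda>x. C m (l - x)) (\<lambda>x. - C' m (l - x))"
  using edge_eig_C[of l m 1] by simp

lemma edge_eig_D:
  assumes "edge_eig l m f f'" "x \<in> {0..l}"
  shows "(f has_real_derivative f' x) (at x within {0..l})"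
  using assms unfolding edge_eig_def by blast

lemma rep_dir:
  assumes e: "edge_eig l m f f'" and f0: "f 0 = 0" and lp: "l > 0"
    and pos: "\<forall>x\<in>{0<..l}. S m x > 0" and x: "x \<in> {0..l}"
  shows "f x = f l * (S m x / S m l)"
proof (cases "x = 0")
  case True then show ?thesis using f0 by (simp add: S0)
next
  case False
  then have x0: "0 < x" using x by auto
  have W: "f' y * S m y = f y * S' m y" if "y \<in> {0..l}" for y
    by (rule wr_const[OF e edge_eig_S1, of 0]) (use lp f0 that in \<open>auto simp: S0\<close>)
  have sub: "{x..l} \<subseteq> {0..l}" using x0 by auto
  have "f x * S m l = f l * S m x"
  proof (rule ratio_const[of x l "S m" f f' "S' m"])
    show "\<forall>y\<in>{x..l}. S m y \<noteq> 0" using pos x0 by (metis atLeastAtMost_iff greaterThanAtMost_iff less_irrefl less_le_trans)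
    show "\<forall>y\<in>{x..l}. (f has_real_derivative f' y) (at y within {x..l})"
      using edge_eig_D[OF e] sub by (meson has_field_derivative_subset subsetD)
    show "\<forall>y\<in>{x..l}. (S m has_real_derivative S' m y) (at y within {x..l})"
      using S_deriv by blast
    show "\<forall>y\<in>{x..l}. f' y * S m y = f y * S' m y" using W sub by blast
  qed (use x in auto)
  moreover have "S m l > 0" using pos lp by auto
  ultimately show ?thesis by (simp add: field_simps)
qed

lemma rep_neu:
  assumes e: "edge_eig l m f f'" and f0: "f' l = 0" and lp: "l > 0"
    and pos: "\<forall>y\<in>{0..l}. C m y > 0" and x: "x \<in> {0..l}"
  shows "f x = f 0 * (C m (l - x) / C m l)"
proof -
  have W: "f' y * C m (l - y) = f y * - C' m (l - y)" if "y \<in> {0..l}" for y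
    by (rule wr_const[OF e edge_eig_C1, of l]) (use lp f0 that in \<open>auto simp: C'0\<close>)
  have "f x * C m (l - 0) = f 0 * C m (l - x)"
  proof (rule ratio_const[of 0 l "\<lambda>y. C m (l - y)" f f' "\<lambda>y. - C' m (l - y)"])
    show "\<forall>y\<in>{0..l}. C m (l - y) \<noteq> 0"
    proof
      fix y assume "y \<in> {0..l}"
      then have "l - y \<in> {0..l}" by auto
      then show "C m (l - y) \<noteq> 0" using pos by (metis less_irrefl)
    qed
    show "\<forall>y\<in>{0..l}. (f has_real_derivative f' y) (at y within {0..l})"
      using edge_eig_D[OF e] by blast
    show "\<forall>y\<in>{0..l}. ((\<lambda>y. C m (l - y)) has_real_derivative - C' m (l - y)) (at y within {0..l})"
      using edge_eig_C1[of l m] unfolding edge_eig_def by blast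
    show "\<forall>y\<in>{0..l}. f' y * C m (l - y) = f y * - C' m (l - y)" using W by blast
  qed (use x in auto)
  moreover have "C m l > 0" using pos lp by auto
  ultimately show ?thesis by (simp add: field_simps)
qed

lemma rep:
  assumes i: "i \<in> {1,2}" and lp: "\<forall>j\<in>edges i. l j > 0" and g: "good i l m"
    and ef: "is_eigfun_B i l gA m \<phi>"
  shows "\<forall>j\<in>{1..4}. \<forall>x\<in>{0..l j}. \<phi> j x = \<phi> 1 (l 1) * (S m x / S m (l j))"
    and "i = 2 \<Longrightarrow> \<forall>x\<in>{0..l 0}. \<phi> 0 x = \<phi> 1 (l 1) * (C m (l 0 - x) / C m (l 0))"
proof -
  obtain \<phi>' where e: "\<forall>j\<in>edges i. edge_eig (l j) m (\<phi> j) (\<phi>' j)" and d0: "\<forall>j\<in>{1..4}. \<phi> j 0 = 0"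
    and cA: "\<forall>j\<in>{1..4}. \<phi> j (l j) = \<phi> 1 (l 1)" and c0: "i = 2 \<longrightarrow> \<phi> 0 0 = \<phi> 1 (l 1)"
    and K: "(if i = 2 then \<phi>' 0 0 else 0) + (\<Sum>j\<in>{1..4}. - \<phi>' j (l j)) = coupling i gA * \<phi> 1 (l 1)"
    and n0: "i = 2 \<longrightarrow> \<phi>' 0 (l 0) = 0" and nt: "\<exists>j\<in>edges i. \<exists>x\<in>{0..l j}. \<phi> j x \<noteq> 0"
    by (rule eigfun_D[OF ef])
  show "\<forall>j\<in>{1..4}. \<forall>x\<in>{0..l j}. \<phi> j x = \<phi> 1 (l 1) * (S m x / S m (l j))"
  proof (intro ballI)
    fix j x assume j: "j \<in> {1..4}" and x: "x \<in> {0..l j}"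
    have "\<phi> j x = \<phi> j (l j) * (S m x / S m (l j))"
    proof (rule rep_dir[OF _ _ _ _ x])
      show "edge_eig (l j) m (\<phi> j) (\<phi>' j)" using e edges14[OF i j] by blast
      show "\<phi> j 0 = 0" using d0 j by blast
      show "l j > 0" by (rule lp[rule_format, OF edges14[OF i j]])
      show "\<forall>x\<in>{0<..l j}. 0 < S m x"
      proof
        fix y assume "y \<in> {0<..l j}"
        then show "0 < S m y" by (intro good_S_pos[OF g j]) auto
      qed
    qed
    then show "\<phi> j x = \<phi> 1 (l 1) * (S m x / S m (l j))" unfolding cA[rule_format, OF j] .
  qed
  assume i2: "i = 2"
  show "\<forall>x\<in>{0..l 0}. \<phi> 0 x = \<phi> 1 (l 1) * (C m (l 0 - x) / C m (l 0))"
  proof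
    fix x assume x: "x \<in> {0..l 0}"
    have "\<phi> 0 x = \<phi> 0 0 * (C m (l 0 - x) / C m (l 0))"
    proof (rule rep_neu[OF _ _ _ _ x])
      show "edge_eig (l 0) m (\<phi> 0) (\<phi>' 0)" using e edges0[OF i2] by blast
      show "\<phi>' 0 (l 0) = 0" using n0 i2 by blast
      show "l 0 > 0" by (rule lp[rule_format, OF edges0[OF i2]])
      show "\<forall>y\<in>{0..l 0}. 0 < C m y"
      proof
        fix y assume "y \<in> {0..l 0}"
        then show "0 < C m y" by (intro good_C_pos[OF g i2]) auto
      qed
    qed
    then show "\<phi> 0 x = \<phi> 1 (l 1) * (C m (l 0 - x) / C m (l 0))" unfolding c0[rule_format, OF i2] .
  qed
qed

lemma amp_nonzero:
  assumes i: "i \<in> {1,2}" and lp: "\<forall>j\<in>edges i. l j > 0" and g: "good i l m"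
    and ef: "is_eigfun_B i l gA m \<phi>"
  shows "\<phi> 1 (l 1) \<noteq> 0"
proof
  assume a: "\<phi> 1 (l 1) = 0"
  have "\<exists>j\<in>edges i. \<exists>x\<in>{0..l j}. \<phi> j x \<noteq> 0" using ef unfolding is_eigfun_B_def by blast
  then obtain j x where jx: "j \<in> edges i" "x \<in> {0..l j}" "\<phi> j x \<noteq> 0" by blast
  from edges_cases[OF i jx(1)] show False
  proof
    assume j: "j = 0 \<and> i = 2"
    then have "\<phi> j x = \<phi> 1 (l 1) * (C m (l 0 - x) / C m (l 0))" using rep(2)[OF i lp g ef] jx(2) by blast
    then show False using a jx(3) by simp
  next
    assume j: "j \<in> {1..4}"
    then have "\<phi> j x = \<phi> 1 (l 1) * (S m x / S m (l j))" using rep(1)[OF i lp g ef] jx(2) by blast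
    then show False using a jx(3) by simp
  qed
qed



lemma pos_pair:
  assumes i: "i \<in> {1,2}" and lp: "\<forall>j\<in>edges i. l j > 0"
    and ef: "is_eigfun_B i l gA mu \<phi>" and eg: "is_eigfun_B i l gA lam \<psi>"
    and p14: "\<forall>j\<in>{1..4}. \<forall>x\<in>{0<..<l j}. 0 < c * (\<phi> j x * \<psi> j x)"
    and p0: "i = 2 \<longrightarrow> (\<forall>x\<in>{0<..<l 0}. 0 < c * (\<phi> 0 x * \<psi> 0 x))"
  shows "lam = mu"
proof (rule ccontr)
  assume ne: "lam \<noteq> mu"
  obtain \<phi>' where e1: "\<forall>j\<in>edges i. edge_eig (l j) mu (\<phi> j) (\<phi>' j)" and d1: "\<forall>j\<in>{1..4}. \<phi> j 0 = 0"
    and cA1: "\<forall>j\<in>{1..4}. \<phi> j (l j) = \<phi> 1 (l 1)" and c01: "i = 2 \<longrightarrow> \<phi> 0 0 = \<phi> 1 (l 1)"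
    and K1: "(if i = 2 then \<phi>' 0 0 else 0) + (\<Sum>j\<in>{1..4}. - \<phi>' j (l j)) = coupling i gA * \<phi> 1 (l 1)"
    and n01: "i = 2 \<longrightarrow> \<phi>' 0 (l 0) = 0" and nt1: "\<exists>j\<in>edges i. \<exists>x\<in>{0..l j}. \<phi> j x \<noteq> 0"
    by (rule eigfun_D[OF ef])
  obtain \<psi>' where e2: "\<forall>j\<in>edges i. edge_eig (l j) lam (\<psi> j) (\<psi>' j)" and d2: "\<forall>j\<in>{1..4}. \<psi> j 0 = 0"
    and cA2: "\<forall>j\<in>{1..4}. \<psi> j (l j) = \<psi> 1 (l 1)" and c02: "i = 2 \<longrightarrow> \<psi> 0 0 = \<psi> 1 (l 1)"
    and K2: "(if i = 2 then \<psi>' 0 0 else 0) + (\<Sum>j\<in>{1..4}. - \<psi>' j (l j)) = coupling i gA * \<psi> 1 (l 1)"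
    and n02: "i = 2 \<longrightarrow> \<psi>' 0 (l 0) = 0" and nt2: "\<exists>j\<in>edges i. \<exists>x\<in>{0..l j}. \<psi> j x \<noteq> 0"
    by (rule eigfun_D[OF eg])
  define a where "a = \<phi> 1 (l 1)"
  define b where "b = \<psi> 1 (l 1)"
  define d where "d = c * (lam - mu)"
  define W where "W j = \<phi>' j (l j) * b - a * \<psi>' j (l j)" for j
  have Wpos: "0 < d * W j" if j: "j \<in> {1..4}" for j
  proof -
    have ej: "j \<in> edges i" by (rule edges14[OF i j])
    have "c * (lam - mu) * ((\<phi>' j (l j) * \<psi> j (l j) - \<phi> j (l j) * \<psi>' j (l j)) - (\<phi>' j 0 * \<psi> j 0 - \<phi> j 0 * \<psi>' j 0)) > 0"
      by (rule edge_W_pos[OF e1[rule_format, OF ej] e2[rule_format, OF ej] lp[rule_format, OF ej] bspec[OF p14 j] ne])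
    moreover have "\<phi> j (l j) = a" "\<psi> j (l j) = b" "\<phi> j 0 = 0" "\<psi> j 0 = 0"
      using cA1[rule_format, OF j] cA2[rule_format, OF j] d1[rule_format, OF j] d2[rule_format, OF j]
      unfolding a_def b_def by auto
    ultimately show ?thesis unfolding d_def W_def by simp
  qed
  have E: "d * (if i = 2 then \<phi>' 0 0 * b - a * \<psi>' 0 0 else 0) \<le> 0"
  proof (cases "i = 2")
    case True
    have ej: "0 \<in> edges i" by (rule edges0[OF True])
    have "c * (lam - mu) * ((\<phi>' 0 (l 0) * \<psi> 0 (l 0) - \<phi> 0 (l 0) * \<psi>' 0 (l 0)) - (\<phi>' 0 0 * \<psi> 0 0 - \<phi> 0 0 * \<psi>' 0 0)) > 0"
      by (rule edge_W_pos[OF e1[rule_format, OF ej] e2[rule_format, OF ej] lp[rule_format, OF ej] mp[OF p0 True] ne])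
    moreover have "\<phi>' 0 (l 0) = 0" "\<psi>' 0 (l 0) = 0" "\<phi> 0 0 = a" "\<psi> 0 0 = b"
      using n01 n02 c01 c02 True unfolding a_def b_def by auto
    ultimately have "0 < c * (lam - mu) * (a * \<psi>' 0 0 - \<phi>' 0 0 * b)" by simp
    moreover have "c * (lam - mu) * (\<phi>' 0 0 * b - a * \<psi>' 0 0) = - (c * (lam - mu) * (a * \<psi>' 0 0 - \<phi>' 0 0 * b))"
      by (simp add: algebra_simps)
    ultimately show ?thesis using True unfolding d_def by simp
  qed simp
  have key: "(if i = 2 then \<phi>' 0 0 * b - a * \<psi>' 0 0 else 0) = (\<Sum>j\<in>{1..4}. W j)"
  proof -
    have S1: "(\<Sum>j\<in>{1..4}. - \<phi>' j (l j)) = - (\<Sum>j\<in>{1..4}. \<phi>' j (l j))" by (rule sum_negf)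
    have S2: "(\<Sum>j\<in>{1..4}. - \<psi>' j (l j)) = - (\<Sum>j\<in>{1..4}. \<psi>' j (l j))" by (rule sum_negf)
    have SW: "(\<Sum>j\<in>{1..4}. W j) = b * (\<Sum>j\<in>{1..4}. \<phi>' j (l j)) - a * (\<Sum>j\<in>{1..4}. \<psi>' j (l j))"
      unfolding W_def by (simp add: sum_subtractf sum_distrib_left mult.commute)
    have k1: "(if i = 2 then \<phi>' 0 0 else 0) - (\<Sum>j\<in>{1..4}. \<phi>' j (l j)) = coupling i gA * a"
      using K1 S1 unfolding a_def by simp
    have k2: "(if i = 2 then \<psi>' 0 0 else 0) - (\<Sum>j\<in>{1..4}. \<psi>' j (l j)) = coupling i gA * b"
      using K2 S2 unfolding b_def by simp
    have "b * ((if i = 2 then \<phi>' 0 0 else 0) - (\<Sum>j\<in>{1..4}. \<phi>' j (l j)))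
        - a * ((if i = 2 then \<psi>' 0 0 else 0) - (\<Sum>j\<in>{1..4}. \<psi>' j (l j))) = 0"
      unfolding k1 k2 by simp
    then show ?thesis unfolding SW by (cases "i = 2") (simp_all add: algebra_simps)
  qed
  have "0 < (\<Sum>j\<in>{1..4}. d * W j)" by (rule sum_pos) (use Wpos in auto)
  then have "0 < d * (\<Sum>j\<in>{1..4}. W j)" by (simp add: sum_distrib_left)
  then show False using E key by simp
qed



theorem lemma4p3:
  fixes i :: nat and l :: "nat \<Rightarrow> real" and gA :: real
  assumes "i \<in> {1, 2}"
    and "\<forall>j\<in>edges i. l j > 0"
  shows "\<exists>lam1.
     is_eigval_B i l gA lam1 \<and>
     (\<forall>mu. is_eigval_B i l gA mu \<longrightarrow> lam1 \<le> mu) \<and>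
     (\<forall>phi psi. is_eigfun_B i l gA lam1 phi \<and> is_eigfun_B i l gA lam1 psi \<longrightarrow>
        (\<exists>c. \<forall>j\<in>edges i. \<forall>x\<in>{0..l j}. psi j x = c * phi j x)) \<and>
     ((l 1 = l 2 \<and> l 2 = l 3 \<and> l 3 = l 4) \<longrightarrow>
        (\<forall>phi. is_eigfun_B i l gA lam1 phi \<longrightarrow>
           (\<forall>j\<in>{1..4}. \<forall>x\<in>{0..l 1}. phi j x = phi 1 x) \<and>
           (\<forall>j\<in>edges i. \<forall>x\<in>{0..l j}. (j \<noteq> 0 \<and> x = 0) \<or> phi j x \<noteq> 0)))"
proof -
  note i = assms(1) and lp = assms(2)
  obtain m1 where g1: "good i l m1" and h1: "Hf i l m1 = - coupling i gA"
    using exists_root[OF i lp] by blast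
  have E1: "is_eigfun_B i l gA m1 (Phi l m1)" by (rule Phi_eig[OF i lp g1 h1])
  have l14: "l j > 0" if "j \<in> {1..4}" for j using lp edges14[OF i that] by blast
  have l0: "l 0 > 0" if "i = 2" using lp edges0[OF that] by blast
  have min: "\<forall>mu. is_eigval_B i l gA mu \<longrightarrow> m1 \<le> mu"
  proof (intro allI impI)
    fix mu assume "is_eigval_B i l gA mu"
    then obtain \<phi> where ef: "is_eigfun_B i l gA mu \<phi>" unfolding is_eigval_B_def by blast
    show "m1 \<le> mu"
    proof (cases "good i l mu")
      case True
      define a where "a = \<phi> 1 (l 1)"
      have a0: "a \<noteq> 0" unfolding a_def by (rule amp_nonzero[OF i lp True ef])
      have "m1 = mu"
      proof (rule pos_pair[OF i lp ef E1, of a])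
        show "\<forall>j\<in>{1..4}. \<forall>x\<in>{0<..<l j}. 0 < a * (\<phi> j x * Phi l m1 j x)"
        proof (intro ballI)
          fix j x assume j: "j \<in> {1..4}" and x: "x \<in> {0<..<l j}"
          have xx: "x \<in> {0..l j}" using x by auto
          have f: "\<phi> j x = a * (S mu x / S mu (l j))" using rep(1)[OF i lp True ef] j xx unfolding a_def by blast
          have p: "Phi l m1 j x = S m1 x / S m1 (l j)" using j by (simp add: Phi_def)
          have s1: "S mu x > 0" "S mu (l j) > 0" "S m1 x > 0" "S m1 (l j) > 0"
            using good_S_pos[OF True j, of x] good_S_pos[OF True j, of "l j"]
              good_S_pos[OF g1 j, of x] good_S_pos[OF g1 j, of "l j"] x l14[OF j] by auto
          have aa: "0 < a * a" using a0 not_real_square_gt_zero by blast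
          have "0 < (S mu x / S mu (l j)) * (S m1 x / S m1 (l j))" using s1 by simp
          then have "0 < (a * a) * ((S mu x / S mu (l j)) * (S m1 x / S m1 (l j)))" by (rule mult_pos_pos[OF aa])
          then show "0 < a * (\<phi> j x * Phi l m1 j x)" unfolding f p by (simp add: algebra_simps)
        qed
        show "i = 2 \<longrightarrow> (\<forall>x\<in>{0<..<l 0}. 0 < a * (\<phi> 0 x * Phi l m1 0 x))"
        proof (intro impI ballI)
          fix x assume i2: "i = 2" and x: "x \<in> {0<..<l 0}"
          have xx: "x \<in> {0..l 0}" using x by auto
          have f: "\<phi> 0 x = a * (C mu (l 0 - x) / C mu (l 0))" using rep(2)[OF i lp True ef i2] xx unfolding a_def by blast
          have p: "Phi l m1 0 x = C m1 (l 0 - x) / C m1 (l 0)" by (simp add: Phi_def)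
          have s1: "C mu (l 0 - x) > 0" "C mu (l 0) > 0" "C m1 (l 0 - x) > 0" "C m1 (l 0) > 0"
            using good_C_pos[OF True i2, of "l 0 - x"] good_C_pos[OF True i2, of "l 0"]
              good_C_pos[OF g1 i2, of "l 0 - x"] good_C_pos[OF g1 i2, of "l 0"] x l0[OF i2] by auto
          have aa: "0 < a * a" using a0 not_real_square_gt_zero by blast
          have "0 < (C mu (l 0 - x) / C mu (l 0)) * (C m1 (l 0 - x) / C m1 (l 0))" using s1 by simp
          then have "0 < (a * a) * ((C mu (l 0 - x) / C mu (l 0)) * (C m1 (l 0 - x) / C m1 (l 0)))" by (rule mult_pos_pos[OF aa])
          then show "0 < a * (\<phi> 0 x * Phi l m1 0 x)" unfolding f p by (simp add: algebra_simps)
        qed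
      qed
      then show ?thesis by simp
    next
      case False
      then have F: "\<not> (mu \<le> 0 \<or> ((\<forall>j\<in>{1..4}. sqrt mu * l j < pi) \<and> (i = 2 \<longrightarrow> sqrt mu * l 0 < pi/2)))"
        unfolding good_def .
      then have mu0: "mu > 0" by linarith
      have bad: "(\<exists>j\<in>{1..4}. pi \<le> sqrt mu * l j) \<or> (i = 2 \<and> pi/2 \<le> sqrt mu * l 0)"
        unfolding not_less[symmetric] using F by blast
      show ?thesis
      proof (cases "m1 \<le> 0")
        case True then show ?thesis using mu0 by simp
      next
        case False
        then have gg: "(\<forall>j\<in>{1..4}. sqrt m1 * l j < pi) \<and> (i = 2 \<longrightarrow> sqrt m1 * l 0 < pi/2)"
          using g1 unfolding good_def by auto
        have "sqrt m1 < sqrt mu"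
          using bad
        proof
          assume "\<exists>j\<in>{1..4}. pi \<le> sqrt mu * l j"
          then obtain j where j: "j \<in> {1..4}" "pi \<le> sqrt mu * l j" by blast
          then have "sqrt m1 * l j < sqrt mu * l j" using gg by force
          then show ?thesis using l14[OF j(1)] by simp
        next
          assume b: "i = 2 \<and> pi/2 \<le> sqrt mu * l 0"
          then have "sqrt m1 * l 0 < sqrt mu * l 0" using gg by force
          then show ?thesis using l0 b by simp
        qed
        then show ?thesis by simp
      qed
    qed
  qed
  have simple: "\<forall>phi psi. is_eigfun_B i l gA m1 phi \<and> is_eigfun_B i l gA m1 psi \<longrightarrow>
        (\<exists>c. \<forall>j\<in>edges i. \<forall>x\<in>{0..l j}. psi j x = c * phi j x)"
  proof (intro allI impI)
    fix phi psi assume h: "is_eigfun_B i l gA m1 phi \<and> is_eigfun_B i l gA m1 psi"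
    define a where "a = phi 1 (l 1)"
    define b where "b = psi 1 (l 1)"
    have a0: "a \<noteq> 0" unfolding a_def using amp_nonzero[OF i lp g1] h by blast
    show "\<exists>c. \<forall>j\<in>edges i. \<forall>x\<in>{0..l j}. psi j x = c * phi j x"
    proof (intro exI[of _ "b / a"] ballI)
      fix j x assume j: "j \<in> edges i" and x: "x \<in> {0..l j}"
      from edges_cases[OF i j] show "psi j x = b / a * phi j x"
      proof
        assume j0: "j = 0 \<and> i = 2"
        then have "phi j x = a * (C m1 (l 0 - x) / C m1 (l 0))" "psi j x = b * (C m1 (l 0 - x) / C m1 (l 0))"
          using rep(2)[OF i lp g1, of gA phi] rep(2)[OF i lp g1, of gA psi] h x unfolding a_def b_def by auto
        then show ?thesis using a0 by simp
      next
        assume j1: "j \<in> {1..4}"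
        then have "phi j x = a * (S m1 x / S m1 (l j))" "psi j x = b * (S m1 x / S m1 (l j))"
          using rep(1)[OF i lp g1, of gA phi] rep(1)[OF i lp g1, of gA psi] h x unfolding a_def b_def by auto
        then show ?thesis using a0 by simp
      qed
    qed
  qed
  have eqlen: "(l 1 = l 2 \<and> l 2 = l 3 \<and> l 3 = l 4) \<longrightarrow>
        (\<forall>phi. is_eigfun_B i l gA m1 phi \<longrightarrow>
           (\<forall>j\<in>{1..4}. \<forall>x\<in>{0..l 1}. phi j x = phi 1 x) \<and>
           (\<forall>j\<in>edges i. \<forall>x\<in>{0..l j}. (j \<noteq> 0 \<and> x = 0) \<or> phi j x \<noteq> 0))"
  proof (intro impI allI)
    fix phi assume L: "l 1 = l 2 \<and> l 2 = l 3 \<and> l 3 = l 4" and ef: "is_eigfun_B i l gA m1 phi"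
    define a where "a = phi 1 (l 1)"
    have a0: "a \<noteq> 0" unfolding a_def by (rule amp_nonzero[OF i lp g1 ef])
    have lj: "l j = l 1" if "j \<in> {1..4}" for j
    proof -
      have "j = 1 \<or> j = 2 \<or> j = 3 \<or> j = 4" using that by auto
      then show ?thesis using L by auto
    qed
    have R1: "phi j x = a * (S m1 x / S m1 (l j))" if "j \<in> {1..4}" "x \<in> {0..l j}" for j x
      using rep(1)[OF i lp g1 ef] that unfolding a_def by blast
    show "(\<forall>j\<in>{1..4}. \<forall>x\<in>{0..l 1}. phi j x = phi 1 x) \<and>
           (\<forall>j\<in>edges i. \<forall>x\<in>{0..l j}. (j \<noteq> 0 \<and> x = 0) \<or> phi j x \<noteq> 0)"
    proof (intro conjI ballI)
      fix j :: nat and x :: real assume j: "j \<in> {1..4}" and x: "x \<in> {0..l 1}"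
      have one: "(1::nat) \<in> {1..4}" by simp
      show "phi j x = phi 1 x"
        using R1[OF j] R1[OF one] x lj[OF j] by simp
    next
      fix j x assume j: "j \<in> edges i" and x: "x \<in> {0..l j}"
      from edges_cases[OF i j] show "(j \<noteq> 0 \<and> x = 0) \<or> phi j x \<noteq> 0"
      proof
        assume j0: "j = 0 \<and> i = 2"
        then have "phi j x = a * (C m1 (l 0 - x) / C m1 (l 0))"
          using rep(2)[OF i lp g1 ef] x unfolding a_def by auto
        moreover have "C m1 (l 0 - x) > 0" "C m1 (l 0) > 0"
          using good_C_pos[OF g1, of "l 0 - x"] good_C_pos[OF g1, of "l 0"] j0 x l0 by auto
        ultimately show ?thesis using a0 by simp
      next
        assume j1: "j \<in> {1..4}"
        show ?thesis
        proof (cases "x = 0")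
          case True then show ?thesis using j1 by auto
        next
          case False
          then have "S m1 x > 0" "S m1 (l j) > 0"
            using good_S_pos[OF g1 j1, of x] good_S_pos[OF g1 j1, of "l j"] x l14[OF j1] by auto
          then show ?thesis using R1[OF j1 x] a0 by simp
        qed
      qed
    qed
  qed
  show ?thesis
    using E1 min simple eqlen unfolding is_eigval_B_def by blast
qed

end
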